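(* Let $w,s,t$ be positive integers with $t\mid s$ and $t\ne s$. Let $p$ be a prime and $\alpha$ a positive integer with $p^\alpha\mid s/t$ but $p^{\alpha+1}\nmid s/t$. Assume that either $p\ne2$, or $p=2$ and $\alpha>1$. For $l\in I\big(s/(p^\alpha t)\big)$ set $$f(l)=\sum_{k\in\{p^{\alpha-1}l,\;p^{\alpha}l\}}(-1)^{\omega(s/(kt))}(-1)^{ktw}\binom{k(tw-1)-1}{k-1}.$$ Then $f(l)\equiv0\pmod{p^{2\alpha}}$ for every $l\in I\big(s/(p^\alpha t)\big)$.
   Context: For a positive integer $n$, $\omega(n)$ is the number of distinct primes dividing $n$, and $I(n)=\{k\in\mathbb{N}: k\mid n \text{ and } n/k \text{ is square-free}\}$. Binomial coefficients $\binom{n}{m}$ with $n\in\mathbb{Z}$, $m\ge0$ mean $n(n-1)\cdots(n-m+1)/m!$. *)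

theory Defs
  imports "HOL-Computational_Algebra.Computational_Algebra" "HOL-Number_Theory.Number_Theory"
begin

definition omega :: "nat \<Rightarrow> nat" where
  "omega n = card (prime_factors n)"

definition Iset :: "nat \<Rightarrow> nat set" where
  "Iset n = {k. k > 0 \<and> k dvd n \<and> squarefree (n div k)}"

definition ibinom :: "int \<Rightarrow> nat \<Rightarrow> int" where
  "ibinom n m = (\<Prod>i<m. n - int i) div fact m"

end

theory Submission imports Defs "HOL.Binomial_Plus" begin

lemma ibinom_fact: "ibinom a m * fact m = (\<Prod>i<m. a - int i)"
  unfolding ibinom_def using gbinomial_int_mult_fact'[of a m]
  by (simp add: gbinomial_prod_rev atLeast0LessThan)

lemma falling_shift: "(\<Prod>i<K-1. x - 1 - int i) = (\<Prod>j\<in>{1..<K}. (x::int) - int j)"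
proof -
  have "(\<Prod>j\<in>{1..<K}. x - int j) = (\<Prod>i\<in>{..<K-1}. x - int (Suc i))"
    by (rule prod.reindex_bij_witness[of _ "\<lambda>i. Suc i" "\<lambda>j. j - 1"]) auto
  thus ?thesis by (simp add: algebra_simps)
qed

lemma split_prod:
  fixes f :: "nat \<Rightarrow> int" assumes "p > 0"
  shows "(\<Prod>j\<in>{1..<p*n}. f j) = (\<Prod>j\<in>{j\<in>{1..<p*n}. \<not> p dvd j}. f j) * (\<Prod>i\<in>{1..<n}. f (p*i))"
proof -
  have eq: "{1..<p*n} = {j\<in>{1..<p*n}. \<not> p dvd j} \<union> (\<lambda>i. p*i) ` {1..<n}"
  proof (intro equalityI subsetI)
    fix j assume j: "j \<in> {1..<p*n}"
    show "j \<in> {j\<in>{1..<p*n}. \<not> p dvd j} \<union> (\<lambda>i. p*i) ` {1..<n}"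
    proof (cases "p dvd j")
      case True
      then obtain i where i: "j = p*i" by blast
      with j assms have "1 \<le> i" "i < n" by (auto simp: mult_less_cancel1)
      with i show ?thesis by auto
    qed (use j in auto)
  qed (use assms in auto)
  have inj: "inj_on (\<lambda>i. p*i) {1..<n}" using assms by (auto simp: inj_on_def)
  have "(\<Prod>j\<in>{1..<p*n}. f j) = (\<Prod>j\<in>{j\<in>{1..<p*n}. \<not> p dvd j}. f j) * (\<Prod>j\<in>(\<lambda>i. p*i) ` {1..<n}. f j)"
    by (subst eq, rule prod.union_disjoint) auto
  also have "(\<Prod>j\<in>(\<lambda>i. p*i) ` {1..<n}. f j) = (\<Prod>i\<in>{1..<n}. f (p*i))"
    using prod.reindex[OF inj] by simp
  finally show ?thesis .
qed

lemma pair_prod: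
  fixes f :: "nat \<Rightarrow> int"
  assumes "\<forall>j\<in>S. 2*j \<noteq> K" "S \<subseteq> {1..<K}" "\<forall>j\<in>S. K - j \<in> S"
  shows "(\<Prod>j\<in>S. f j) = (\<Prod>j\<in>{j\<in>S. 2*j<K}. f j * f (K-j))"
proof -
  define S1 where "S1 = {j\<in>S. 2*j<K}"
  have fin: "finite S" using assms(2) finite_subset by blast
  have eq: "S = S1 \<union> (\<lambda>j. K - j) ` S1"
  proof (intro equalityI subsetI)
    fix j assume j: "j \<in> S"
    show "j \<in> S1 \<union> (\<lambda>j. K - j) ` S1"
    proof (cases "2*j < K")
      case False
      with assms j have "2*j > K" "j < K" by force+
      hence "K - j \<in> S1" "j = K - (K - j)" using assms j by (auto simp: S1_def)
      thus ?thesis by blast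
    qed (use j in \<open>auto simp: S1_def\<close>)
  qed (use assms in \<open>auto simp: S1_def\<close>)
  have disj: "S1 \<inter> (\<lambda>j. K - j) ` S1 = {}" using assms by (auto simp: S1_def)
  have inj: "inj_on (\<lambda>j. K - j) S1" using assms by (auto simp: S1_def inj_on_def)
  have "(\<Prod>j\<in>S. f j) = (\<Prod>j\<in>S1. f j) * (\<Prod>j\<in>(\<lambda>j. K - j) ` S1. f j)"
    by (subst eq, rule prod.union_disjoint) (use fin disj in \<open>auto simp: S1_def\<close>)
  also have "(\<Prod>j\<in>(\<lambda>j. K - j) ` S1. f j) = (\<Prod>j\<in>S1. f (K - j))"
    using prod.reindex[OF inj] by simp
  finally show ?thesis by (simp add: S1_def prod.distrib)
qed

lemma key:
  fixes p n a :: nat and M :: int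
  assumes p: "prime p" and n: "n > 0" and pe: "p \<noteq> 2 \<or> even n" and pa: "p^a dvd p*n"
  shows "[ibinom (int (p*n) * M - 1) (p*n - 1) = ibinom (int n * M - 1) (n - 1)] (mod int p ^ (2*a))"
proof -
  define K where "K = p*n"
  define x where "x = int K * M"
  define S where "S = {j\<in>{1..<K}. \<not> p dvd j}"
  define A where "A = ibinom (x - 1) (K - 1)"
  define B where "B = ibinom (int n * M - 1) (n - 1)"
  define PS where "PS = (\<Prod>j\<in>S. x - int j)"
  define Q where "Q = (\<Prod>j\<in>S. int j)"
  have p0: "p > 0" "p > 1" using p prime_gt_1_nat by (auto intro: prime_gt_0_nat)
  have K0: "K > 0" using p0 n by (simp add: K_def)
  have hA: "A * fact (K-1) = (\<Prod>j\<in>{1..<K}. x - int j)"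
    unfolding A_def ibinom_fact falling_shift ..
  have hB: "B * fact (n-1) = (\<Prod>j\<in>{1..<n}. int n * M - int j)"
    unfolding B_def ibinom_fact falling_shift ..
  have "(\<Prod>j\<in>{1..<K}. x - int j) = PS * (\<Prod>i\<in>{1..<n}. x - int (p*i))"
    unfolding PS_def S_def K_def by (rule split_prod[OF p0(1)])
  also have "(\<Prod>i\<in>{1..<n}. x - int (p*i)) = (\<Prod>i\<in>{1..<n}. int p * (int n * M - int i))"
    by (simp add: x_def K_def algebra_simps)
  also have "\<dots> = int p ^ (n-1) * (\<Prod>i\<in>{1..<n}. int n * M - int i)"
    by (simp add: prod.distrib)
  finally have e1: "A * fact (K-1) = PS * int p ^ (n-1) * (\<Prod>i\<in>{1..<n}. int n * M - int i)"
    using hA by simp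
  have fK: "(fact (K-1) :: int) = (\<Prod>j\<in>{1..<K}. int j)"
  proof -
    have "{1..<K} = {1..K-1}" using K0 by auto
    thus ?thesis by (simp add: fact_prod of_nat_prod)
  qed
  have fn: "(fact (n-1) :: int) = (\<Prod>j\<in>{1..<n}. int j)"
  proof -
    have "{1..<n} = {1..n-1}" using n by auto
    thus ?thesis by (simp add: fact_prod of_nat_prod)
  qed
  have "(\<Prod>j\<in>{1..<K}. int j) = Q * (\<Prod>i\<in>{1..<n}. int (p*i))"
    unfolding Q_def S_def K_def by (rule split_prod[OF p0(1)])
  also have "\<dots> = Q * (int p ^ (n-1) * fact (n-1))"
    unfolding fn by (simp add: prod.distrib)
  finally have e2: "(fact (K-1) :: int) = Q * (int p ^ (n-1) * fact (n-1))" using fK by simp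
  have "Q * A * (int p ^ (n-1) * fact (n-1)) = PS * B * (int p ^ (n-1) * fact (n-1))"
  proof -
    have "Q * A * (int p ^ (n-1) * fact (n-1)) = A * fact (K-1)" using e2 by simp
    also have "\<dots> = PS * int p ^ (n-1) * (B * fact (n-1))" using e1 hB by simp
    finally show ?thesis by simp
  qed
  hence QA: "Q * A = PS * B" using p0 by simp
  have notmid: "\<forall>j\<in>S. 2*j \<noteq> K"
  proof
    fix j assume j: "j \<in> S"
    show "2*j \<noteq> K"
    proof
      assume h: "2*j = K"
      show False
      proof (cases "p = 2")
        case True
        with pe h have "j = n" "even n" by (auto simp: K_def)
        with j True show False by (auto simp: S_def)
      next
        case False
        have "p dvd 2*j" using h by (simp add: K_def)
        hence "p dvd 2 \<or> p dvd j" using p prime_dvd_mult_iff by blast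
        moreover have "\<not> p dvd 2" using False p0
          by (auto dest: dvd_imp_le)
        ultimately show False using j by (auto simp: S_def)
      qed
    qed
  qed
  have Ssub: "S \<subseteq> {1..<K}" by (auto simp: S_def)
  have Srefl: "\<forall>j\<in>S. K - j \<in> S"
  proof
    fix j assume j: "j \<in> S"
    have "\<not> p dvd (K - j)"
    proof
      assume "p dvd K - j"
      moreover have "p dvd K" by (simp add: K_def)
      ultimately have "p dvd K - (K - j)" by (simp add: dvd_diff_nat)
      with j show False by (auto simp: S_def)
    qed
    with j show "K - j \<in> S" by (auto simp: S_def)
  qed
  have PSc: "[PS = Q] (mod (int K)^2)"
  proof -
    have "PS = (\<Prod>j\<in>{j\<in>S. 2*j<K}. (x - int j) * (x - int (K - j)))"
      unfolding PS_def by (rule pair_prod[OF notmid Ssub Srefl])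
    moreover have "Q = (\<Prod>j\<in>{j\<in>S. 2*j<K}. int j * int (K - j))"
      unfolding Q_def by (rule pair_prod[OF notmid Ssub Srefl])
    moreover have "[(\<Prod>j\<in>{j\<in>S. 2*j<K}. (x - int j) * (x - int (K - j))) =
                    (\<Prod>j\<in>{j\<in>S. 2*j<K}. int j * int (K - j))] (mod (int K)^2)"
    proof (rule cong_prod)
      fix j assume "j \<in> {j\<in>S. 2*j<K}"
      hence jK: "j \<le> K" by (auto simp: S_def)
      have "(x - int j) * (x - int (K - j)) - int j * int (K - j) = (int K)^2 * (M^2 - M)"
        using jK by (simp add: x_def of_nat_diff power2_eq_square algebra_simps)
      thus "[(x - int j) * (x - int (K - j)) = int j * int (K - j)] (mod (int K)^2)"
        by (simp add: cong_iff_dvd_diff)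
    qed
    ultimately show ?thesis by simp
  qed
  have dv: "int p ^ (2*a) dvd (int K)^2"
  proof -
    have "int p ^ a dvd int K" using pa unfolding K_def by (metis of_nat_dvd_iff of_nat_power)
    hence "(int p ^ a)^2 dvd (int K)^2" by (rule dvd_power_same)
    thus ?thesis by (simp add: power_mult mult.commute)
  qed
  have "[Q * A = Q * B] (mod int p ^ (2*a))"
  proof -
    have "[PS * B = Q * B] (mod (int K)^2)" using PSc by (rule cong_scalar_right)
    hence "[PS * B = Q * B] (mod int p ^ (2*a))" using dv cong_dvd_modulus by blast
    thus ?thesis using QA by simp
  qed
  moreover have "coprime Q (int p ^ (2*a))"
  proof -
    have "coprime Q (int p)" unfolding Q_def
    proof (rule prod_coprime_left)
      fix j assume "j \<in> S"
      hence "\<not> p dvd j" by (auto simp: S_def)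
      hence "coprime p j" using p prime_imp_coprime by blast
      thus "coprime (int j) (int p)" by (simp add: coprime_commute)
    qed
    thus ?thesis by simp
  qed
  ultimately have "[A = B] (mod int p ^ (2*a))" using cong_mult_lcancel by blast
  thus ?thesis by (simp add: A_def B_def x_def K_def)
qed

lemma omega_mult_prime:
  assumes "prime p" "q > 0" "\<not> p dvd q"
  shows "omega (p*q) = Suc (omega q)"
proof -
  have "prime_factors (p*q) = insert p (prime_factors q)"
  proof -
    have "p \<noteq> 0" "q \<noteq> 0" using assms by auto
    hence "prime_factors (p*q) = prime_factors p \<union> prime_factors q"
      by (rule prime_factors_product)
    moreover have "prime_factors p = {p}" using assms(1) by (rule prime_prime_factors)
    ultimately show ?thesis by simp
  qed
  moreover have "p \<notin> prime_factors q" using assms by auto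
  ultimately show ?thesis by (simp add: omega_def)
qed

theorem lemma3p3:
  fixes w s t p \<alpha> :: nat
  assumes "w > 0" "s > 0" "t > 0" "t dvd s" "t \<noteq> s"
    and "prime p" "\<alpha> > 0"
    and "p ^ \<alpha> dvd s div t" "\<not> p ^ (\<alpha> + 1) dvd s div t"
    and "p \<noteq> 2 \<or> (p = 2 \<and> \<alpha> > 1)"
  shows "\<forall>l \<in> Iset (s div (p ^ \<alpha> * t)).
     [(\<Sum>k\<in>{p ^ (\<alpha> - 1) * l, p ^ \<alpha> * l}.
         (-1::int) ^ omega (s div (k * t)) * (-1::int) ^ (k * t * w)
         * ibinom (int k * (int t * int w - 1) - 1) (k - 1)) = (0::int)] (mod (int p ^ (2 * \<alpha>)))"
proof
  fix l assume l: "l \<in> Iset (s div (p ^ \<alpha> * t))"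
  note p = assms(6)
  have p0: "p > 0" "p > 1" using p prime_gt_1_nat by (auto intro: prime_gt_0_nat)
  define d where "d = s div t"
  have sd: "s = t * d" using assms(4) by (simp add: d_def)
  obtain m where dm: "d = p^\<alpha> * m" using assms(8) d_def by (auto elim: dvdE)
  have mdef: "s div (p ^ \<alpha> * t) = m"
    using sd dm assms(3) p0 by (simp add: ac_simps)
  have pm: "\<not> p dvd m"
  proof
    assume "p dvd m"
    then obtain r where "m = p * r" by blast
    hence "d = p^(\<alpha>+1) * r" using dm by simp
    thus False using assms(9) d_def by simp
  qed
  have l0: "l > 0" and lm: "l dvd m" using l mdef by (auto simp: Iset_def)
  obtain q where mq: "m = l * q" using lm by blast
  have pq: "\<not> p dvd q" using pm mq by auto
  have q0: "q > 0" using mq sd dm assms(2) by (cases "q = 0") auto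
  define k1 where "k1 = p ^ (\<alpha> - 1) * l"
  define k2 where "k2 = p ^ \<alpha> * l"
  have k21: "k2 = p * k1" using assms(7) by (simp add: k1_def k2_def power_eq_if)
  have k10: "k1 > 0" using l0 p0 by (simp add: k1_def)
  have kne: "k1 \<noteq> k2" using k21 k10 p0 by simp
  have s1: "s div (k1 * t) = p * q"
  proof -
    have "s = (k1 * t) * (p * q)" using sd dm mq k21 by (simp add: k2_def ac_simps)
    thus ?thesis using k10 assms(3) by simp
  qed
  have s2: "s div (k2 * t) = q"
  proof -
    have "s = (k2 * t) * q" using sd dm mq by (simp add: k2_def ac_simps)
    thus ?thesis using k10 k21 p0 assms(3) by simp
  qed
  have om: "omega (s div (k1 * t)) = Suc (omega (s div (k2 * t)))"
    using s1 s2 omega_mult_prime[OF p q0 pq] by simp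
  have par: "even (k1 * t * w) \<longleftrightarrow> even (k2 * t * w)"
  proof (cases "p = 2")
    case True
    with assms(10) have "\<alpha> - 1 > 0" by simp
    hence "2 dvd p^(\<alpha> - 1)" using True by (metis dvd_power)
    hence "even k1" by (simp add: k1_def)
    thus ?thesis using k21 by simp
  next
    case False
    hence "p > 2" using p0 by simp
    hence "odd p" using p prime_odd_nat by blast
    thus ?thesis using k21 by simp
  qed
  define M where "M = int t * int w - 1"
  define A where "A = ibinom (int k2 * M - 1) (k2 - 1)"
  define B where "B = ibinom (int k1 * M - 1) (k1 - 1)"
  have pe: "p \<noteq> 2 \<or> even k1"
  proof (cases "p = 2")
    case True
    with assms(10) have "\<alpha> - 1 > 0" by simp
    hence "2 dvd p^(\<alpha> - 1)" using True by (metis dvd_power)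
    thus ?thesis by (simp add: k1_def)
  qed simp
  have pa: "p^\<alpha> dvd p*k1" using k21 unfolding k2_def by (metis dvd_triv_left)
  have AB: "[A = B] (mod int p ^ (2*\<alpha>))"
    using key[OF p k10 pe pa, of M] by (simp add: A_def B_def k21)
  define e where "e = (-1::int) ^ omega (s div (k2 * t)) * (-1::int) ^ (k2 * t * w)"
  have e1: "(-1::int) ^ omega (s div (k1 * t)) * (-1::int) ^ (k1 * t * w) = - e"
  proof -
    have "(-1::int)^(k1*t*w) = (-1)^(k2*t*w)" using par by (simp add: minus_one_power_iff)
    thus ?thesis using om by (simp add: e_def)
  qed
  have sum: "(\<Sum>k\<in>{k1, k2}.
         (-1::int) ^ omega (s div (k * t)) * (-1::int) ^ (k * t * w)
         * ibinom (int k * (int t * int w - 1) - 1) (k - 1)) = e * A - e * B"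
    using kne e1 by (simp add: e_def A_def B_def M_def)
  have "[e * A - e * B = e * B - e * B] (mod int p ^ (2*\<alpha>))"
    using AB by (intro cong_diff cong_mult cong_refl)
  hence "[e * A - e * B = 0] (mod int p ^ (2*\<alpha>))" by simp
  thus "[(\<Sum>k\<in>{p ^ (\<alpha> - 1) * l, p ^ \<alpha> * l}.
         (-1::int) ^ omega (s div (k * t)) * (-1::int) ^ (k * t * w)
         * ibinom (int k * (int t * int w - 1) - 1) (k - 1)) = (0::int)] (mod (int p ^ (2 * \<alpha>)))"
    using sum by (simp add: k1_def k2_def)
qed

end
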